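(* For each integer $g\ge 3$ there exists a nonempty congruence family of genus $g$ hyperelliptic curves over $\mathbb{Q}$ with a rational Weierstrass point $\infty$ such that every curve $C$ in the family has good reduction at $3$ and satisfies $C_{\mathbb{F}_3}(\mathbb{F}_3)=\{\overline{\infty}\}$ and $C_{\mathbb{F}_3}(\mathbb{F}_9)=\{\overline{\infty},(0,\pm\alpha),(1,\pm\alpha),(2,\pm\alpha)\}$ for some $\alpha\in\mathbb{F}_9\setminus\mathbb{F}_3$.
   Context: A genus $g$ hyperelliptic curve over $\mathbb{Q}$ with a marked rational Weierstrass point $\infty$ has a unique minimal affine model $y^2=x^{2g+1}+a_2x^{2g-1}+\dots+a_{2g+1}$ with integer coefficients, separable right-hand side, $\infty$ the point at infinity, and no prime $p$ with $p^{2i}\mid a_i$ for all $i\ge2$. A congruence family is the set of such curves whose minimal-equation coefficients satisfy a given finite set of congruence conditions. $C_{\mathbb{F}_3}$ denotes the reduction mod $3$ of the minimal model, with points written in the affine coordinates $(x,y)$ together with the reduction $\overline{\infty}$ of $\infty$. *)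

theory Defs
  imports "HOL-Computational_Algebra.Computational_Algebra" "Berlekamp_Zassenhaus.Finite_Field"
begin

typedef three = "{0::nat, 1, 2}" by auto

lemma card_three: "CARD(three) = 3"
proof -
  have "CARD(three) = card {0::nat, 1, 2}"
    using type_definition.card[OF type_definition_three] by simp
  thus ?thesis by simp
qed

instance three :: finite
proof
  show "finite (UNIV :: three set)"
    using type_definition_three
    by (metis (mono_tags) finite.emptyI finite_imageI finite_insert type_definition.Abs_image)
qed

instance three :: prime_card
  by standard (simp add: card_three)

type_synonym F3 = "three mod_ring"

definition separable :: "'a::field poly \<Rightarrow> bool" where
  "separable p \<longleftrightarrow> coprime p (pderiv p)"

definition hyp_rhs :: "nat \<Rightarrow> (nat \<Rightarrow> int) \<Rightarrow> int poly" where
  "hyp_rhs g a = Polynomial.monom 1 (2*g+1) + (\<Sum>i\<in>{2..2*g+1}. Polynomial.monom (a i) (2*g+1-i))"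

(* a is the coefficient vector of a minimal model of a genus g hyperelliptic curve
   with marked rational Weierstrass point at infinity *)
definition minimal_model :: "nat \<Rightarrow> (nat \<Rightarrow> int) \<Rightarrow> bool" where
  "minimal_model g a \<longleftrightarrow>
     separable (map_poly of_int (hyp_rhs g a) :: rat poly) \<and>
     \<not> (\<exists>p::int. prime p \<and> (\<forall>i\<in>{2..2*g+1}. p ^ (2*i) dvd a i))"

definition in_cong_family :: "nat \<Rightarrow> (nat \<Rightarrow> int) \<Rightarrow> (nat \<Rightarrow> int) \<Rightarrow> (nat \<Rightarrow> int) \<Rightarrow> bool" where
  "in_cong_family g c m a \<longleftrightarrow> minimal_model g a \<and> (\<forall>i\<in>{2..2*g+1}. [a i = c i] (mod m i))"

definition rhs3 :: "nat \<Rightarrow> (nat \<Rightarrow> int) \<Rightarrow> F3 poly" where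
  "rhs3 g a = map_poly of_int (hyp_rhs g a)"

(* good reduction at 3: the reduction of the minimal model is smooth, i.e. rhs separable mod 3 *)
definition good_red3 :: "nat \<Rightarrow> (nat \<Rightarrow> int) \<Rightarrow> bool" where
  "good_red3 g a \<longleftrightarrow> separable (rhs3 g a)"

(* F_9 is modelled as F_3[t]/(t^2+1); its elements are represented uniquely by
   polynomials in F_3[t] of degree <= 1. *)
definition F9 :: "F3 poly set" where
  "F9 = {u. degree u \<le> 1}"

definition F9_modulus :: "F3 poly" where
  "F9_modulus = [:1, 0, 1:]"

definition affine_pts_F9 :: "nat \<Rightarrow> (nat \<Rightarrow> int) \<Rightarrow> (F3 poly \<times> F3 poly) set" where
  "affine_pts_F9 g a = {(x, y). x \<in> F9 \<and> y \<in> F9 \<and>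
      F9_modulus dvd (y ^ 2 - pcompose (rhs3 g a) x)}"

definition affine_pts_F3 :: "nat \<Rightarrow> (nat \<Rightarrow> int) \<Rightarrow> (F3 \<times> F3) set" where
  "affine_pts_F3 g a = {(x, y). y ^ 2 = poly (rhs3 g a) x}"

end

theory Submission
  imports Defs "Berlekamp_Zassenhaus.Square_Free_Int_To_Square_Free_GFp"
begin


lemma CHAR_F3: "CHAR(F3) = 3" by (simp add: card_three)

lemma F3_of_int_eq: "(of_int a :: F3) = of_int b \<longleftrightarrow> a mod 3 = b mod 3"
  using of_int_eq_iff_cong_CHAR[of a b, where 'a=F3] CHAR_F3 by (simp add: cong_def)

lemma F3_three: "(3::F3) = 0"
  using F3_of_int_eq[of 3 0] by simp

lemma F3_cases: "(x::F3) = 0 \<or> x = 1 \<or> x = -1"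
proof -
  define t where "t = to_int_mod_ring x"
  have x: "x = of_int t"
    by (simp add: of_int_of_int_mod_ring t_def)
  have "t \<in> {0..<3}"
    using range_to_int_mod_ring[where 'a=three] card_three t_def by (metis rangeI of_nat_numeral)
  then have "t = 0 \<or> t = 1 \<or> t = 2"
    by (simp only: atLeastLessThan_iff) arith
  moreover have m: "(of_int 2 :: F3) = -1" using F3_of_int_eq[of 2 "-1"] by simp
  ultimately show ?thesis using x m by auto
qed

lemma F3_ex_int: "\<exists>a::int. a \<in> {0,1,2} \<and> (x::F3) = of_int a"
proof -
  have m: "(2 :: F3) = -1" using F3_of_int_eq[of 2 "-1"] by simp
  have "x = of_int 0 \<or> x = of_int 1 \<or> x = of_int 2" using F3_cases[of x] by (simp add: m)
  then show ?thesis
  proof (elim disjE)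
    assume "x = of_int 0" then show ?thesis by (intro exI[of _ 0]) simp
  next
    assume "x = of_int 1" then show ?thesis by (intro exI[of _ 1]) simp
  next
    assume "x = of_int 2" then show ?thesis by (intro exI[of _ 2]) simp
  qed
qed

definition e :: "int \<times> int \<Rightarrow> F3 poly" where
  "e p = [:of_int (fst p), of_int (snd p):]"

fun pm :: "int \<times> int \<Rightarrow> int \<times> int \<Rightarrow> int \<times> int" where
  "pm (a,b) (c,d) = (a*c - b*d, a*d + b*c)"

primrec pp :: "int \<times> int \<Rightarrow> nat \<Rightarrow> int \<times> int" where
  "pp p 0 = (1,0)" | "pp p (Suc n) = pm p (pp p n)"

lemma degree_e: "degree (e p) \<le> 1"
  by (simp add: e_def)

lemma degree_M: "degree F9_modulus = 2"
  by (simp add: F9_modulus_def)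

lemma e_mod: "e p mod F9_modulus = e p"
  by (rule mod_poly_less) (use degree_e[of p] degree_M in auto)

lemma mult2: "[:A,B:]*[:C,D:] = [:A*C - B*D, A*D + B*C:] + [:B*D:]*[:1,0,1::F3:]"
  by simp

lemma e_mult_expand: "e p * e q = e (pm p q) + [:of_int (snd p * snd q):] * F9_modulus"
proof -
  obtain a b c d where p: "p = (a,b)" and q: "q = (c,d)" by (cases p, cases q) auto
  show ?thesis unfolding p q e_def F9_modulus_def pm.simps fst_conv snd_conv of_int_mult of_int_diff of_int_add
    by (rule mult2)
qed

lemma e_mult: "(e p * e q) mod F9_modulus = e (pm p q)"
  unfolding e_mult_expand mod_mult_self1 by (rule e_mod)

lemma e_pow: "(e p ^ n) mod F9_modulus = e (pp p n)"
proof (induction n)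
  case 0
  have "(1::F3 poly) mod F9_modulus = 1" by (rule mod_poly_less) (simp add: degree_M)
  then show ?case by (simp add: e_def)
next
  case (Suc n)
  have "e p ^ Suc n mod F9_modulus = (e p * (e p ^ n mod F9_modulus)) mod F9_modulus"
    by (simp only: power_Suc mod_mult_right_eq)
  also have "\<dots> = (e p * e (pp p n)) mod F9_modulus" by (simp only: Suc.IH)
  also have "\<dots> = e (pp p (Suc n))" by (simp only: e_mult pp.simps)
  finally show ?case .
qed

lemma e_add: "e p + e q = e (fst p + fst q, snd p + snd q)"
  by (simp add: e_def)
lemma e_diff: "e p - e q = e (fst p - fst q, snd p - snd q)"
  by (simp add: e_def)
lemma e_one: "1 = e (1,0)"
  by (simp add: e_def)
lemma e_eq: "e p = e q \<longleftrightarrow> fst p mod 3 = fst q mod 3 \<and> snd p mod 3 = snd q mod 3"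
  by (simp add: e_def F3_of_int_eq)

lemma F9_e: assumes "x \<in> F9" shows "\<exists>a b. a \<in> {0,1,2} \<and> b \<in> {0,1,2} \<and> x = e (a,b)"
proof -
  have "degree x \<le> 1" using assms by (simp add: F9_def)
  then have x: "x = [:Polynomial.coeff x 0, Polynomial.coeff x 1:]"
  proof (intro poly_eqI)
    fix n
    assume d: "degree x \<le> 1"
    show "Polynomial.coeff x n = Polynomial.coeff [:Polynomial.coeff x 0, Polynomial.coeff x 1:] n"
    proof (cases "n \<le> 1")
      case True
      then have "n = 0 \<or> n = 1" by auto
      then show ?thesis by auto
    next
      case False
      have k: "n = Suc (Suc (n - 2))" using False by arith
      have "Polynomial.coeff x n = 0" using d False by (intro coeff_eq_0) simp
      then show ?thesis by (subst k, simp)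
    qed
  qed
  obtain a where a: "a \<in> {0,1,2}" "Polynomial.coeff x 0 = of_int a" using F3_ex_int by blast
  obtain b where b: "b \<in> {0,1,2}" "Polynomial.coeff x 1 = of_int b" using F3_ex_int by blast
  have xe: "x = e (a,b)" by (subst x) (simp add: e_def a(2) b(2)[unfolded One_nat_def])
  show ?thesis by (rule exI[of _ a], rule exI[of _ b], intro conjI, fact a(1), fact b(1), fact xe)
qed

lemma one_mod_M: "(1::F3 poly) mod F9_modulus = 1"
  by (rule mod_poly_less) (simp add: degree_M)

lemma pp8: assumes "a \<in> {0,1,2}" "b \<in> {0,1,2}" "(a,b) \<noteq> (0,0)"
  shows "e (pp (a,b) 8) = e (1,0)"
  using assms by (auto simp: e_eq eval_nat_numeral)

lemma pp8': assumes "a \<in> {0,1,2}" "b \<in> {0,1,2}"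
  shows "e (pp (a,b) 8) = e (1,0) \<or> e (pp (a,b) 8) = e (0,0)"
  using assms by (auto simp: e_eq eval_nat_numeral)

lemma pow_period:
  fixes x :: "F3 poly"
  assumes "x ^ 8 mod F9_modulus = 1"
  shows "x ^ n mod F9_modulus = x ^ (n mod 8) mod F9_modulus"
proof -
  have n: "n = 8 * (n div 8) + n mod 8" by simp
  have "x ^ n = (x ^ 8) ^ (n div 8) * x ^ (n mod 8)"
    by (subst n) (simp only: power_add power_mult)
  moreover have "(x ^ 8) ^ (n div 8) mod F9_modulus = 1"
    by (metis power_mod assms power_one one_mod_M)
  ultimately show ?thesis
    by (metis mod_mult_left_eq mult_1)
qed

lemma pcompose_monom1: "pcompose (Polynomial.monom 1 n) q = q ^ n"
  by (induction n) (simp_all add: monom_Suc pcompose_pCons monom_0)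

lemma no_y:
  assumes v: "v ^ 4 mod F9_modulus = e (-1,0)" and y: "y \<in> F9"
  shows "\<not> F9_modulus dvd (y ^ 2 - v)"
proof
  assume "F9_modulus dvd (y ^ 2 - v)"
  then have yv: "y ^ 2 mod F9_modulus = v mod F9_modulus" by (simp add: mod_eq_dvd_iff)
  obtain c d where cd: "c \<in> {0,1,2}" "d \<in> {0,1,2}" "y = e (c,d)" using F9_e[OF y] by blast
  have "y ^ 8 mod F9_modulus = ((y ^ 2 mod F9_modulus) ^ 4) mod F9_modulus"
    by (simp add: power_mod flip: power_mult)
  also have "\<dots> = v ^ 4 mod F9_modulus" by (simp add: yv power_mod)
  finally have "e (pp (c,d) 8) = e (-1,0)" using v cd(3) e_pow by simp
  then show False using pp8'[OF cd(1,2)] by (auto simp: e_eq)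
qed

lemma e_zero: "e (0,0) = 0" by (simp add: e_def)

lemma F3_one_neq: "(1::F3) \<noteq> -1" "(0::F3) \<noteq> -1"
  using F3_of_int_eq[of 1 "-1"] F3_of_int_eq[of 0 "-1"] by auto

lemma F3_sq_neq: "(y::F3) ^ 2 \<noteq> -1"
  using F3_cases[of y] F3_one_neq by (auto simp: power2_eq_square)

lemma neg_one_poly: "(-1::F3 poly) = [:-1:]"
  by (simp only: one_pCons minus_pCons minus_zero)

lemma key_const:
  assumes y: "y \<in> F9"
  shows "F9_modulus dvd (y ^ 2 - [:-1:]) \<longleftrightarrow> (y = [:0,1:] \<or> y = - [:0,1:])"
proof -
  obtain c d where cd: "c \<in> {0,1,2}" "d \<in> {0,1,2}" and ye: "y = e (c,d)" using F9_e[OF y] by blast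
  have "(y ^ 2 - [:-1:]) mod F9_modulus = (y ^ 2 mod F9_modulus + 1 mod F9_modulus) mod F9_modulus"
  proof -
    have "[:-1:] = - (1::F3 poly)" by (simp only: one_pCons minus_pCons minus_zero)
    then have h: "y ^ 2 - [:-1:] = y ^ 2 + 1" by simp
    show ?thesis unfolding h by (simp add: mod_add_eq)
  qed
  also have "\<dots> = e (fst (pp (c,d) 2) + 1, snd (pp (c,d) 2))"
    by (simp only: ye e_pow one_mod_M e_one e_add e_mod fst_conv snd_conv add_0_right)
  finally have m: "(y ^ 2 - [:-1:]) mod F9_modulus = e (fst (pp (c,d) 2) + 1, snd (pp (c,d) 2))" .
  have y1: "[:0,1:] = e (0,1)" by (simp add: e_def)
  have y2: "- [:0,1:] = e (0,-1)" by (simp add: e_def neg_one_poly)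
  have "F9_modulus dvd (y ^ 2 - [:-1:]) \<longleftrightarrow> e (fst (pp (c,d) 2) + 1, snd (pp (c,d) 2)) = e (0,0)"
    by (simp only: dvd_eq_mod_eq_0 m e_zero)
  also have "\<dots> \<longleftrightarrow> (e (c,d) = e (0,1) \<or> e (c,d) = e (0,-1))"
    using cd by (auto simp: e_eq eval_nat_numeral)
  also have "\<dots> \<longleftrightarrow> (y = [:0,1:] \<or> y = - [:0,1:])"
  proof -
    have "y = [:0,1:] \<longleftrightarrow> e (c,d) = e (0,1)" by (simp only: ye y1)
    moreover have "y = - [:0,1:] \<longleftrightarrow> e (c,d) = e (0,-1)" by (simp only: ye y2)
    ultimately show ?thesis by blast
  qed
  finally show ?thesis .
qed

lemma pts_generic:
  assumes f: "rhs3 g a = f"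
  and A: "\<And>k. poly f k = -1"
  and B: "\<And>a b. a \<in> {0,1,2} \<Longrightarrow> b \<in> {1,2} \<Longrightarrow>
             (pcompose f (e (a,b))) ^ 4 mod F9_modulus = e (-1,0)"
  shows "affine_pts_F3 g a = {}"
    and "affine_pts_F9 g a = {(x, y). \<exists>k::F3. x = [:k:] \<and> (y = [:0,1:] \<or> y = - [:0,1:])}"
proof -
  show "affine_pts_F3 g a = {}"
    unfolding affine_pts_F3_def f A using F3_sq_neq by auto
  have key: "F9_modulus dvd (y ^ 2 - pcompose f x) \<longleftrightarrow> (\<exists>k. x = [:k:] \<and> (y = [:0,1:] \<or> y = - [:0,1:]))"
    if x: "x \<in> F9" and y: "y \<in> F9" for x y
  proof -
    obtain a b where ab: "a \<in> {0,1,2}" "b \<in> {0,1,2}" and xe: "x = e (a,b)" using F9_e[OF x] by blast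
    show ?thesis
    proof (cases "b = 0")
      case True
      then have xc: "x = [:of_int a:]" using xe by (simp add: e_def)
      have "pcompose f x = [:-1:]" by (simp add: xc pcompose_pCons_0 A)
      then show ?thesis using key_const[OF y] xc by auto
    next
      case False
      then have b: "b \<in> {1,2}" using ab by auto
      have "\<not> F9_modulus dvd (y ^ 2 - pcompose f x)"
        using no_y[OF B[OF ab(1) b] y] xe by simp
      moreover have "\<not> (\<exists>k. x = [:k:])"
      proof
        assume "\<exists>k. x = [:k:]"
        then obtain k where "x = [:k:]" by blast
        then have "Polynomial.coeff x 1 = 0" by simp
        then have "(of_int b :: F3) = of_int 0" using xe by (simp add: e_def)
        then have "b mod 3 = 0 mod 3" by (simp only: F3_of_int_eq)
        then show False using b by auto
      qed
      ultimately show ?thesis by blast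
    qed
  qed
  show "affine_pts_F9 g a = {(x, y). \<exists>k::F3. x = [:k:] \<and> (y = [:0,1:] \<or> y = - [:0,1:])}"
  proof -
    have inF9: "[:k:] \<in> F9" "[:0,1:] \<in> F9" "- [:0,1:] \<in> F9" for k :: F3
      by (auto simp: F9_def)
    show ?thesis
    proof (rule Set.set_eqI)
      fix z :: "F3 poly \<times> F3 poly"
      obtain x y where z: "z = (x,y)" by (cases z)
      show "z \<in> affine_pts_F9 g a \<longleftrightarrow> z \<in> {(x, y). \<exists>k::F3. x = [:k:] \<and> (y = [:0,1:] \<or> y = - [:0,1:])}"
        unfolding affine_pts_F9_def f z using key[of x y] inF9 by auto
    qed
  qed
qed

lemma pow4_mod: "(v::F3 poly) ^ 4 mod F9_modulus = (v mod F9_modulus) ^ 4 mod F9_modulus"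
  by (simp add: power_mod)

lemma mod3: "((A::F3 poly) - B - C) mod F9_modulus = (A mod F9_modulus - B mod F9_modulus - C) mod F9_modulus"
proof -
  have eq: "(A - B - C) - (A mod F9_modulus - B mod F9_modulus - C) = (A - A mod F9_modulus) - (B - B mod F9_modulus)"
    by (simp add: algebra_simps)
  have "F9_modulus dvd (A - B - C) - (A mod F9_modulus - B mod F9_modulus - C)"
    unfolding eq by (intro dvd_diff dvd_minus_mod)
  then show ?thesis by (simp only: mod_eq_dvd_iff)
qed

lemma fam_val:
  fixes x :: "F3 poly"
  assumes x8: "x ^ 8 mod F9_modulus = 1"
  shows "(pcompose (Polynomial.monom 1 n - Polynomial.monom 1 m - 1) x) ^ 4 mod F9_modulus
       = (x ^ (n mod 8) mod F9_modulus - x ^ (m mod 8) mod F9_modulus - 1) ^ 4 mod F9_modulus"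
proof -
  have "pcompose (Polynomial.monom 1 n - Polynomial.monom 1 m - 1) x = x ^ n - x ^ m - 1"
    by (simp add: pcompose_diff pcompose_monom1 pcompose_1)
  moreover have "(x ^ n - x ^ m - 1) mod F9_modulus
      = (x ^ n mod F9_modulus - x ^ m mod F9_modulus - 1) mod F9_modulus"
    by (rule mod3)
  moreover have "(x ^ (n mod 8) mod F9_modulus - x ^ (m mod 8) mod F9_modulus - 1) mod F9_modulus
      = x ^ (n mod 8) mod F9_modulus - x ^ (m mod 8) mod F9_modulus - 1"
  proof -
    have "degree (x ^ (n mod 8) mod F9_modulus - x ^ (m mod 8) mod F9_modulus - 1) < degree F9_modulus"
    proof -
      have d1: "degree (x ^ k mod F9_modulus) < 2" for k
        using degree_mod_less'[of F9_modulus "x ^ k"] degree_M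
        by (metis F9_modulus_def One_nat_def degree_0 pCons_eq_0_iff zero_less_numeral zero_neq_one)
      have "degree (x ^ (n mod 8) mod F9_modulus - x ^ (m mod 8) mod F9_modulus - 1) \<le>
            max (max (degree (x ^ (n mod 8) mod F9_modulus)) (degree (x ^ (m mod 8) mod F9_modulus))) (degree (1::F3 poly))"
        by (meson degree_diff_le_max max.mono order_refl order_trans)
      then show ?thesis using d1[of "n mod 8"] d1[of "m mod 8"] degree_M by simp
    qed
    then show ?thesis by (rule mod_poly_less)
  qed
  ultimately show ?thesis
    using pow_period[OF x8, of n] pow_period[OF x8, of m] pow4_mod
    by metis
qed

definition val4 :: "int \<Rightarrow> int \<Rightarrow> nat \<Rightarrow> nat \<Rightarrow> int \<times> int" where
  "val4 a b r s = pp (fst (pp (a,b) r) - fst (pp (a,b) s) - 1, snd (pp (a,b) r) - snd (pp (a,b) s) - 0) 4"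

lemma val4_13: "a \<in> {0,1,2} \<Longrightarrow> b \<in> {1,2} \<Longrightarrow> e (val4 a b 1 3) = e (-1,0)"
  by (auto simp: val4_def e_eq eval_nat_numeral)
lemma val4_31: "a \<in> {0,1,2} \<Longrightarrow> b \<in> {1,2} \<Longrightarrow> e (val4 a b 3 1) = e (-1,0)"
  by (auto simp: val4_def e_eq eval_nat_numeral)
lemma val4_57: "a \<in> {0,1,2} \<Longrightarrow> b \<in> {1,2} \<Longrightarrow> e (val4 a b 5 7) = e (-1,0)"
  by (auto simp: val4_def e_eq eval_nat_numeral)
lemma val4_75: "a \<in> {0,1,2} \<Longrightarrow> b \<in> {1,2} \<Longrightarrow> e (val4 a b 7 5) = e (-1,0)"
  by (auto simp: val4_def e_eq eval_nat_numeral)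

lemma fam_B:
  assumes r: "(n mod 8, m mod 8) \<in> {(1,3),(3,1),(5,7),(7,5)}"
    and ab: "a \<in> {0,1,2}" "b \<in> {1,2}"
  shows "(pcompose (Polynomial.monom 1 n - Polynomial.monom 1 m - 1) (e (a,b))) ^ 4 mod F9_modulus = e (-1,0)"
proof -
  have "(a,b) \<noteq> (0,0)" using ab by auto
  then have "e (pp (a,b) 8) = e (1,0)" using pp8[of a b] ab by auto
  then have x8: "e (a,b) ^ 8 mod F9_modulus = 1"
    by (simp only: e_pow e_one[symmetric])
  let ?V = "(fst (pp (a,b) (n mod 8)) - fst (pp (a,b) (m mod 8)) - 1,
             snd (pp (a,b) (n mod 8)) - snd (pp (a,b) (m mod 8)) - 0)"
  have "(pcompose (Polynomial.monom 1 n - Polynomial.monom 1 m - 1) (e (a,b))) ^ 4 mod F9_modulus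
     = (e (a,b) ^ (n mod 8) mod F9_modulus - e (a,b) ^ (m mod 8) mod F9_modulus - 1) ^ 4 mod F9_modulus"
    by (rule fam_val[OF x8])
  also have "\<dots> = (e (pp (a,b) (n mod 8)) - e (pp (a,b) (m mod 8)) - e (1,0)) ^ 4 mod F9_modulus"
    by (simp only: e_pow e_one[symmetric])
  also have "\<dots> = e ?V ^ 4 mod F9_modulus"
    by (simp only: e_diff fst_conv snd_conv)
  also have "\<dots> = e (pp ?V 4)" by (rule e_pow)
  also have "\<dots> = e (val4 a b (n mod 8) (m mod 8))" by (simp only: val4_def)
  also have "\<dots> = e (-1,0)"
    using r val4_13[OF ab] val4_31[OF ab] val4_57[OF ab] val4_75[OF ab] by auto
  finally show ?thesis .
qed



lemma coeff_hyp_rhs: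
  "Polynomial.coeff (hyp_rhs g a) k =
     (if k = 2*g+1 then 1 else if k + 2 \<le> 2*g+1 then a (2*g+1-k) else 0)"
proof -
  let ?N = "2*g+1"
  have s: "(\<Sum>i\<in>{2..?N}. Polynomial.coeff (Polynomial.monom (a i) (?N - i)) k)
        = (\<Sum>i\<in>{2..?N}. if i = ?N - k \<and> k \<le> ?N then a i else 0)"
    by (rule sum.cong) (auto simp: coeff_monom)
  also have "\<dots> = (if k + 2 \<le> ?N then a (?N - k) else 0)"
  proof (cases "k \<le> ?N")
    case True
    then have "(\<Sum>i\<in>{2..?N}. if i = ?N - k \<and> k \<le> ?N then a i else 0)
             = (\<Sum>i\<in>{2..?N}. if i = ?N - k then a i else 0)" by simp
    also have "\<dots> = (if ?N - k \<in> {2..?N} then a (?N - k) else 0)"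
      by (rule sum.delta) simp
    finally show ?thesis using True by auto
  next
    case False
    then show ?thesis by simp
  qed
  finally have s2: "(\<Sum>i\<in>{2..?N}. Polynomial.coeff (Polynomial.monom (a i) (?N - i)) k)
        = (if k + 2 \<le> ?N then a (?N - k) else 0)" .
  show ?thesis
    unfolding hyp_rhs_def coeff_add coeff_sum s2 by (auto simp: coeff_monom)
qed

lemma hyp_rhs_of_poly:
  fixes F :: "int poly"
  assumes deg: "degree F = 2*g+1" and lc: "Polynomial.coeff F (2*g+1) = 1"
    and c1: "Polynomial.coeff F (2*g) = 0"
  shows "hyp_rhs g (\<lambda>i. Polynomial.coeff F (2*g+1-i)) = F"
proof (rule poly_eqI)
  fix k
  show "Polynomial.coeff (hyp_rhs g (\<lambda>i. Polynomial.coeff F (2*g+1-i))) k = Polynomial.coeff F k"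
  proof (cases "k = 2*g+1")
    case True then show ?thesis using lc by (simp add: coeff_hyp_rhs)
  next
    case False
    show ?thesis
    proof (cases "k + 2 \<le> 2*g+1")
      case True
      then show ?thesis using False by (simp add: coeff_hyp_rhs)
    next
      case F2: False
      then have "k = 2*g \<or> k > 2*g+1" using False by auto
      then have "Polynomial.coeff F k = 0" using c1 deg coeff_eq_0[of F k] by auto
      then show ?thesis using False F2 by (simp add: coeff_hyp_rhs)
    qed
  qed
qed

lemma rhs3_cong:
  assumes "\<forall>i\<in>{2..2*g+1}. [a i = c i] (mod 3)"
  shows "rhs3 g a = rhs3 g c"
proof (rule poly_eqI)
  fix k
  have "(of_int (a (2*g+1-k)) :: F3) = of_int (c (2*g+1-k))" if "k + 2 \<le> 2*g+1"
  proof -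
    have "2*g+1-k \<in> {2..2*g+1}" using that by auto
    then have "[a (2*g+1-k) = c (2*g+1-k)] (mod 3)" using assms by blast
    then show ?thesis
      using of_int_eq_iff_cong_CHAR[of "a (2*g+1-k)" "c (2*g+1-k)", where 'a=F3] by (simp add: card_three)
  qed
  then show "Polynomial.coeff (rhs3 g a) k = Polynomial.coeff (rhs3 g c) k"
    unfolding rhs3_def by (simp add: coeff_map_poly coeff_hyp_rhs)
qed

lemma sep_Q:
  fixes F :: "int poly"
  assumes lc: "lead_coeff F = 1"
    and sep3: "Defs.separable (map_poly of_int F :: F3 poly)"
  shows "Defs.separable (map_poly of_int F :: rat poly)"
proof -
  let ?f = "map_poly of_int F :: F3 poly"
  have sf3: "square_free ?f"
    using separable_imp_square_free[of ?f] sep3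
    unfolding Defs.separable_def Square_Free_Factorization.separable_def by blast
  have sfZ: "square_free F"
  proof (rule square_freeI)
    show "F \<noteq> 0" using lc by auto
    fix q :: "int poly"
    assume dq: "degree q > 0" and dvd: "q * q dvd F"
    from dvd obtain h where F: "F = q * q * h" by (rule dvdE)
    have "lead_coeff q * lead_coeff q * lead_coeff h = 1"
      using lc unfolding F by (simp add: lead_coeff_mult)
    then have "lead_coeff q * (lead_coeff q * lead_coeff h) = 1" by (simp only: mult.assoc)
    then have "lead_coeff q dvd 1" by (rule dvdI[OF sym])
    then have "\<bar>lead_coeff q\<bar> = 1" by (simp only: zdvd1_eq)
    then have "lead_coeff q = 1 \<or> lead_coeff q = -1" by arith
    then have nz: "(of_int (lead_coeff q) :: F3) \<noteq> 0" by (elim disjE) simp_all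
    have "Polynomial.coeff (map_poly of_int q :: F3 poly) (degree q) \<noteq> 0"
      using nz by (simp add: coeff_map_poly)
    then have "degree q \<le> degree (map_poly of_int q :: F3 poly)" by (rule le_degree)
    then have dq3: "degree (map_poly of_int q :: F3 poly) > 0" using dq by simp
    have "?f = map_poly of_int q * map_poly of_int q * map_poly of_int h"
      unfolding F by (simp add: of_int_poly_hom.hom_mult)
    then have "map_poly of_int q * map_poly of_int q dvd ?f" by (rule dvdI)
    moreover have "\<forall>p. degree p > 0 \<longrightarrow> \<not> p * p dvd ?f" using sf3 unfolding square_free_def by (elim conjE)
    ultimately show False using dq3 by blast
  qed
  have "square_free (map_poly of_int F :: rat poly)"
    using square_free_int_rat[OF sfZ] by simp
  then show ?thesis
    using square_free_iff_separable[of "map_poly of_int F :: rat poly"]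
    unfolding Defs.separable_def Square_Free_Factorization.separable_def by blast
qed


lemma coprime_lin: "poly (f::F3 poly) k \<noteq> 0 \<Longrightarrow> coprime f [:-k, 1:]"
proof -
  assume nz: "poly f k \<noteq> 0"
  have pe: "prime_elem [:-k, 1::F3:]" by (rule prime_elem_linear_field_poly) simp
  have "\<not> [:-k, 1:] dvd f" using nz dvd_iff_poly_eq_0[of "-k" f] by simp
  then have "coprime [:-k, 1:] f" by (rule prime_elem_imp_coprime[OF pe])
  then show ?thesis by (simp add: ac_simps)
qed

lemma coprime_monom:
  assumes "poly (f::F3 poly) 0 \<noteq> 0" "c \<noteq> 0"
  shows "coprime f (Polynomial.monom c k)"
proof -
  have "coprime f [:0, 1:]" using coprime_lin[OF assms(1)] by simp
  then have "coprime f ([:0,1:] ^ k)" by simp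
  moreover have "coprime f [:c:]"
    by (rule is_unit_right_imp_coprime) (simp add: is_unit_const_poly_iff assms(2))
  ultimately have "coprime f ([:c:] * [:0,1:] ^ k)" using coprime_mult_right_iff by blast
  moreover have "[:c:] * [:0,1:] ^ k = Polynomial.monom c k" by (simp add: monom_altdef)
  ultimately show ?thesis by simp
qed

lemma F3_of_nat_0: "(of_nat n :: F3) = 0 \<longleftrightarrow> 3 dvd n"
  by (simp add: of_nat_eq_0_iff_char_dvd CHAR_F3 card_three)

lemma fam_poly_val:
  assumes "odd n" "odd m"
  shows "poly (Polynomial.monom 1 n - Polynomial.monom 1 m - 1) (k::F3) = -1"
proof -
  have "k = 0 \<or> k = 1 \<or> k = -1" by (rule F3_cases)
  moreover have "n > 0" "m > 0" using assms by (auto intro: odd_pos)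
  ultimately show ?thesis using assms by (auto simp: poly_monom power_0_left)
qed

lemma fam_sep:
  assumes "odd n" "odd m" "(3 dvd n) \<noteq> (3 dvd m)"
  shows "Defs.separable (Polynomial.monom 1 n - Polynomial.monom 1 m - 1 :: F3 poly)"
proof -
  let ?f = "Polynomial.monom 1 n - Polynomial.monom 1 m - 1 :: F3 poly"
  have p0: "poly ?f 0 \<noteq> 0" using fam_poly_val[OF assms(1,2), of 0] by simp
  have d: "pderiv ?f = Polynomial.monom (of_nat n) (n - 1) - Polynomial.monom (of_nat m) (m - 1)"
    by (simp add: pderiv_diff pderiv_monom)
  show ?thesis
  proof (cases "3 dvd m")
    case True
    then have "\<not> 3 dvd n" using assms(3) by simp
    then have "pderiv ?f = Polynomial.monom (of_nat n) (n - 1)" "(of_nat n :: F3) \<noteq> 0"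
      using True d by (simp_all add: F3_of_nat_0)
    then show ?thesis unfolding Defs.separable_def using coprime_monom[OF p0] by simp
  next
    case False
    then have "3 dvd n" using assms(3) by simp
    then have "pderiv ?f = - Polynomial.monom (of_nat m) (m - 1)" "(of_nat m :: F3) \<noteq> 0"
      using False d by (simp_all add: F3_of_nat_0)
    then show ?thesis unfolding Defs.separable_def using coprime_monom[OF p0] by simp
  qed
qed


lemma prime_pow_not_dvd_one:
  assumes "prime (p::int)" "k > 0" shows "\<not> p ^ k dvd -1"
proof
  assume h: "p ^ k dvd -1"
  then have h1: "p ^ k dvd 1" by (simp only: dvd_minus_iff)
  obtain j where k: "k = Suc j" using assms(2) by (cases k) auto
  have "p dvd p ^ k" unfolding k by simp
  then have "p dvd 1" using h1 by (rule dvd_trans)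
  then show False using not_prime_unit assms(1) by blast
qed

lemma main_generic:
  fixes F :: "int poly" and g :: nat
  assumes g: "g \<ge> 1"
    and deg: "degree F = 2*g+1" and lc: "Polynomial.coeff F (2*g+1) = 1"
    and c1: "Polynomial.coeff F (2*g) = 0" and c0: "Polynomial.coeff F 0 = -1"
    and sep3: "Defs.separable (map_poly of_int F :: F3 poly)"
    and A: "\<And>k. poly (map_poly of_int F :: F3 poly) k = -1"
    and B: "\<And>a b. a \<in> {0,1,2} \<Longrightarrow> b \<in> {1,2} \<Longrightarrow>
             (pcompose (map_poly of_int F :: F3 poly) (e (a,b))) ^ 4 mod F9_modulus = e (-1,0)"
  shows "\<exists>c m :: nat \<Rightarrow> int.
     (\<forall>i\<in>{2..2*g+1}. m i > 0) \<and>
     (\<exists>a. in_cong_family g c m a) \<and>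
     (\<forall>a. in_cong_family g c m a \<longrightarrow>
        good_red3 g a \<and>
        affine_pts_F3 g a = {} \<and>
        (\<exists>\<alpha>\<in>F9. degree \<alpha> = 1 \<and>
           affine_pts_F9 g a =
             {(x, y). \<exists>k::F3. x = [:k:] \<and> (y = \<alpha> \<or> y = - \<alpha>)}))"
proof -
  define c where "c = (\<lambda>i. Polynomial.coeff F (2*g+1-i))"
  define m where "m = (\<lambda>i::nat. 3::int)"
  have hc: "hyp_rhs g c = F" unfolding c_def by (rule hyp_rhs_of_poly[OF deg lc c1])
  have r3c: "rhs3 g c = map_poly of_int F" by (simp add: rhs3_def hc)
  have mm: "minimal_model g c"
    unfolding minimal_model_def
  proof
    have "lead_coeff F = 1" using deg lc by simp
    then show "Defs.separable (map_poly of_int (hyp_rhs g c) :: rat poly)"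
      unfolding hc by (rule sep_Q[OF _ sep3])
    show "\<not> (\<exists>p::int. prime p \<and> (\<forall>i\<in>{2..2*g+1}. p ^ (2*i) dvd c i))"
    proof
      assume "\<exists>p::int. prime p \<and> (\<forall>i\<in>{2..2*g+1}. p ^ (2*i) dvd c i)"
      then obtain p :: int where p: "prime p" and h: "\<forall>i\<in>{2..2*g+1}. p ^ (2*i) dvd c i" by blast
      have "2*g+1 \<in> {2..2*g+1}" using g by simp
      then have "p ^ (2*(2*g+1)) dvd c (2*g+1)" using h by blast
      moreover have "c (2*g+1) = -1" using c0 by (simp add: c_def)
      ultimately show False using prime_pow_not_dvd_one[OF p, of "2*(2*g+1)"] by simp
    qed
  qed
  have fam: "in_cong_family g c m c"
    unfolding in_cong_family_def using mm by simp
  have main: "good_red3 g a \<and> affine_pts_F3 g a = {} \<and>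
        (\<exists>\<alpha>\<in>F9. degree \<alpha> = 1 \<and>
           affine_pts_F9 g a = {(x, y). \<exists>k::F3. x = [:k:] \<and> (y = \<alpha> \<or> y = - \<alpha>)})"
    if "in_cong_family g c m a" for a
  proof -
    have "\<forall>i\<in>{2..2*g+1}. [a i = c i] (mod 3)" using that unfolding in_cong_family_def m_def by simp
    then have r3: "rhs3 g a = map_poly of_int F" by (rule trans[OF rhs3_cong r3c])
    have gr: "good_red3 g a" unfolding good_red3_def r3 by (rule sep3)
    note P = pts_generic[OF r3 A B]
    have a1: "[:0,1::F3:] \<in> F9" "degree [:0,1::F3:] = 1" by (auto simp: F9_def)
    have ex: "\<exists>\<alpha>\<in>F9. degree \<alpha> = 1 \<and>
           affine_pts_F9 g a = {(x, y). \<exists>k::F3. x = [:k:] \<and> (y = \<alpha> \<or> y = - \<alpha>)}"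
    proof (rule bexI[of _ "[:0,1::F3:]"])
      show "degree [:0,1::F3:] = 1 \<and>
           affine_pts_F9 g a = {(x, y). \<exists>k::F3. x = [:k:] \<and> (y = [:0,1::F3:] \<or> y = - [:0,1::F3:])}"
        using a1(2) P(2) by (rule conjI)
      show "[:0,1::F3:] \<in> F9" by (rule a1(1))
    qed
    show ?thesis by (rule conjI[OF gr conjI[OF P(1) ex]])
  qed
  show ?thesis
  proof (rule exI[of _ c], rule exI[of _ m], intro conjI)
    show "\<forall>i\<in>{2..2*g+1}. m i > 0" by (simp add: m_def)
    show "\<exists>a. in_cong_family g c m a" by (rule exI[of _ c]) (rule fam)
    show "\<forall>a. in_cong_family g c m a \<longrightarrow> good_red3 g a \<and> affine_pts_F3 g a = {} \<and>
        (\<exists>\<alpha>\<in>F9. degree \<alpha> = 1 \<and>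
           affine_pts_F9 g a = {(x, y). \<exists>k::F3. x = [:k:] \<and> (y = \<alpha> \<or> y = - \<alpha>)})"
      using main by blast
  qed
qed


lemma mod8_cases:
  assumes "odd n" "odd (m::nat)" "(n + m) mod 8 = 4"
  shows "(n mod 8, m mod 8) \<in> {(1,3),(3,1),(5,7),(7,5)}"
proof -
  have "n mod 8 = 1 \<and> m mod 8 = 3 \<or> n mod 8 = 3 \<and> m mod 8 = 1 \<or> n mod 8 = 5 \<and> m mod 8 = 7 \<or> n mod 8 = 7 \<and> m mod 8 = 5"
    using assms by presburger
  then show ?thesis by auto
qed

lemma map_fam: "(map_poly of_int (Polynomial.monom 1 n - Polynomial.monom 1 m - 1 :: int poly) :: F3 poly)
    = Polynomial.monom 1 n - Polynomial.monom 1 m - 1"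
  by (rule poly_eqI) (simp add: coeff_map_poly coeff_monom coeff_1)

lemma fam_case:
  fixes g m :: nat
  assumes g: "g \<ge> 1" and m: "odd m" "m + 2 \<le> 2*g+1" and r: "(2*g+1 + m) mod 8 = 4"
    and sep: "Defs.separable (Polynomial.monom 1 (2*g+1) - Polynomial.monom 1 m - 1 :: F3 poly)"
  shows "\<exists>c m :: nat \<Rightarrow> int.
     (\<forall>i\<in>{2..2*g+1}. m i > 0) \<and>
     (\<exists>a. in_cong_family g c m a) \<and>
     (\<forall>a. in_cong_family g c m a \<longrightarrow>
        good_red3 g a \<and>
        affine_pts_F3 g a = {} \<and>
        (\<exists>\<alpha>\<in>F9. degree \<alpha> = 1 \<and>
           affine_pts_F9 g a =
             {(x, y). \<exists>k::F3. x = [:k:] \<and> (y = \<alpha> \<or> y = - \<alpha>)}))"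
proof -
  let ?n = "2*g+1"
  define F :: "int poly" where "F = Polynomial.monom 1 ?n - Polynomial.monom 1 m - 1"
  have cF: "Polynomial.coeff F k = (if k = ?n then 1 else 0) - (if k = m then 1 else 0) - (if k = 0 then 1 else 0)" for k
    by (simp add: F_def coeff_monom)
  have m0: "m \<noteq> 0" using m(1) by (metis odd_pos less_irrefl)
  have lc: "Polynomial.coeff F ?n = 1" using cF[of ?n] m by simp
  have deg: "degree F = ?n"
  proof (rule antisym)
    show "degree F \<le> ?n" by (rule degree_le) (use cF m in auto)
    show "?n \<le> degree F" using lc by (intro le_degree) simp
  qed
  have c1: "Polynomial.coeff F (2*g) = 0" using cF[of "2*g"] m g by auto
  have c0: "Polynomial.coeff F 0 = -1" using cF[of 0] m0 by simp
  have mapF: "(map_poly of_int F :: F3 poly) = Polynomial.monom 1 ?n - Polynomial.monom 1 m - 1"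
    unfolding F_def by (rule map_fam)
  have on: "odd ?n" by simp
  show ?thesis
  proof (rule main_generic[OF g deg lc c1 c0])
    show "Defs.separable (map_poly of_int F :: F3 poly)" unfolding mapF by (rule sep)
    show "poly (map_poly of_int F :: F3 poly) k = -1" for k
      unfolding mapF by (rule fam_poly_val[OF on m(1)])
    show "(pcompose (map_poly of_int F :: F3 poly) (e (a,b))) ^ 4 mod F9_modulus = e (-1,0)"
      if "a \<in> {0,1,2}" "b \<in> {1,2}" for a b
      unfolding mapF by (rule fam_B[OF mod8_cases[OF on m(1) r] that])
  qed
qed


lemma F3_2: "(2::F3) = -1" using F3_of_int_eq[of 2 "-1"] by simp
lemma F3_4: "(4::F3) = 1" using F3_of_int_eq[of 4 1] by simp
lemma F3_5: "(5::F3) = -1" using F3_of_int_eq[of 5 "-1"] by simp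
lemma F3_7: "(7::F3) = 1" using F3_of_int_eq[of 7 1] by simp
lemma F3_9: "(9::F3) = 0" using F3_of_int_eq[of 9 0] by simp
lemma F3_13: "(13::F3) = 1" using F3_of_int_eq[of 13 1] by simp

lemma monom1_X: "Polynomial.monom (1::F3) k = [:0,1:] ^ k"
  by (simp add: monom_altdef)

lemma M_X: "F9_modulus = [:0,1:] ^ 2 + 1"
proof -
  have a: "[:0,1::F3:] ^ 2 = [:0,0,1:]" by (simp add: power2_eq_square)
  have b: "[:1,0,1::F3:] = [:0,0,1:] + [:1:]" by (simp only: add_pCons add_0_left add_0_right)
  show ?thesis unfolding F9_modulus_def a b by (simp only: pCons_one)
qed

lemma X_minus: "[:0,1::F3:] - 1 = [:-1,1:]"
  by (simp only: one_pCons diff_pCons diff_0 diff_0_right minus_zero)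
lemma X_plus: "[:0,1::F3:] + 1 = [:1,1:]"
  by (simp only: one_pCons add_pCons add_0_left add_0_right)

lemma t1: "[:0,1::F3:] ^ 6 + [:0,1:] ^ 4 = [:0,1:] ^ 4 * ([:0,1:] ^ 2 + 1)"
proof -
  have "[:0,1::F3:] ^ 4 * ([:0,1:] ^ 2 + 1) = [:0,1:] ^ 4 * [:0,1:] ^ 2 + [:0,1:] ^ 4"
    by (simp only: distrib_left mult_1_right)
  also have "[:0,1::F3:] ^ 4 * [:0,1:] ^ 2 = [:0,1:] ^ 6"
    by (simp only: power_add[symmetric]) simp
  finally show ?thesis by simp
qed
lemma t2: "[:0,1::F3:] ^ 12 - [:0,1:] ^ 6 = [:0,1:] ^ 6 * ([:0,1:] ^ 6 - 1 - 0 * ([:0,1:] ^ 4 - [:0,1:] ^ 2))"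
proof -
  have "[:0,1::F3:] ^ 6 * ([:0,1:] ^ 6 - 1 - 0 * ([:0,1:] ^ 4 - [:0,1:] ^ 2)) = [:0,1:] ^ 6 * [:0,1:] ^ 6 - [:0,1:] ^ 6"
    by (simp only: mult_zero_left diff_0_right right_diff_distrib mult_1_right)
  also have "[:0,1::F3:] ^ 6 * [:0,1:] ^ 6 = [:0,1:] ^ 12"
    by (simp only: power_add[symmetric]) simp
  finally show ?thesis by simp
qed

lemma sep7: "Defs.separable (Polynomial.monom 1 7 - Polynomial.monom 1 5 - 1 :: F3 poly)"
proof -
  let ?f = "Polynomial.monom 1 7 - Polynomial.monom 1 5 - 1 :: F3 poly"
  let ?X = "[:0,1::F3:]"
  have p0: "poly ?f 0 \<noteq> 0" using fam_poly_val[of 7 5 0] by simp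
  have d: "pderiv ?f = Polynomial.monom 1 4 * F9_modulus"
  proof -
    have "pderiv ?f = Polynomial.monom 7 6 - Polynomial.monom 5 4"
      by (simp add: pderiv_diff pderiv_monom)
    also have "\<dots> = Polynomial.monom 1 6 + Polynomial.monom 1 4"
      by (simp add: F3_7 F3_5 monom_altdef)
    also have "\<dots> = Polynomial.monom 1 4 * F9_modulus"
      unfolding M_X monom1_X by (rule t1)
    finally show ?thesis .
  qed
  have fX: "?f = ?X ^ 7 - ?X ^ 5 - 1" by (simp add: monom1_X)
  have "?f mod F9_modulus = (?X ^ 7 mod F9_modulus - ?X ^ 5 mod F9_modulus - 1) mod F9_modulus"
    unfolding fX by (rule mod3)
  also have "\<dots> = (e (pp (0,1) 7) - e (pp (0,1) 5) - e (1,0)) mod F9_modulus"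
  proof -
    have X: "?X = e (0,1)" by (simp add: e_def)
    show ?thesis unfolding X e_pow e_one[symmetric] ..
  qed
  also have "\<dots> = e (-1, -2)" by (simp add: e_diff e_mod eval_nat_numeral)
  also have "\<dots> = [:-1, 1:]" by (simp add: e_def F3_2)
  finally have fm: "?f mod F9_modulus = [:-1, 1:]" .
  have M0: "F9_modulus \<noteq> 0" by (simp add: F9_modulus_def)
  have "poly F9_modulus 1 \<noteq> 0" by (simp add: F9_modulus_def F3_2)
  then have "coprime F9_modulus [:-1,1:]" by (rule coprime_lin)
  then have "coprime (?f mod F9_modulus) F9_modulus" unfolding fm by (simp add: ac_simps)
  then have cM: "coprime ?f F9_modulus" using M0 by simp
  have cX: "coprime ?f (Polynomial.monom 1 4)" by (rule coprime_monom[OF p0]) simp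
  show ?thesis unfolding Defs.separable_def d using cM cX by simp
qed

lemma ring_id6: "((x::'a::comm_ring_1) - 1) ^ 3 * (x + 1) ^ 3 = x ^ 6 - 1 - 3 * (x ^ 4 - x ^ 2)"
  by (simp add: eval_nat_numeral algebra_simps)

lemma sep13: "Defs.separable (Polynomial.monom 1 13 - Polynomial.monom 1 7 - 1 :: F3 poly)"
proof -
  let ?f = "Polynomial.monom 1 13 - Polynomial.monom 1 7 - 1 :: F3 poly"
  let ?X = "[:0,1::F3:]"
  have three: "(3 :: F3 poly) = 0"
  proof -
    have "(3 :: F3 poly) = of_nat 3" by simp
    also have "\<dots> = [:of_nat 3:]" by (rule of_nat_poly)
    also have "\<dots> = 0" using F3_three by simp
    finally show ?thesis .
  qed
  have d: "pderiv ?f = ?X ^ 6 * ((?X - 1) ^ 3 * (?X + 1) ^ 3)"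
  proof -
    have "pderiv ?f = Polynomial.monom 13 12 - Polynomial.monom 7 6"
      by (simp add: pderiv_diff pderiv_monom)
    also have "\<dots> = ?X ^ 12 - ?X ^ 6"
      by (simp add: F3_7 F3_13 monom_altdef)
    also have "\<dots> = ?X ^ 6 * ((?X - 1) ^ 3 * (?X + 1) ^ 3)"
      unfolding ring_id6 three by (rule t2)
    finally show ?thesis .
  qed
  have v: "poly ?f k = -1" for k using fam_poly_val[of 13 7 k] by simp
  have c0: "coprime ?f ?X" using coprime_lin[of ?f 0] v by simp
  have c1: "coprime ?f (?X - 1)" unfolding X_minus using coprime_lin[of ?f 1] v by simp
  have c2: "coprime ?f (?X + 1)" unfolding X_plus using coprime_lin[of ?f "-1"] v by simp
  show ?thesis unfolding Defs.separable_def d using c0 c1 c2 by simp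
qed


lemma mod4: "((A::F3 poly) + B + C - D) mod F9_modulus = (A mod F9_modulus + B mod F9_modulus + C mod F9_modulus - D) mod F9_modulus"
proof -
  have eq: "(A + B + C - D) - (A mod F9_modulus + B mod F9_modulus + C mod F9_modulus - D)
     = (A - A mod F9_modulus) + (B - B mod F9_modulus) + (C - C mod F9_modulus)"
    by (simp add: algebra_simps)
  have "F9_modulus dvd (A + B + C - D) - (A mod F9_modulus + B mod F9_modulus + C mod F9_modulus - D)"
    unfolding eq by (intro dvd_add dvd_minus_mod)
  then show ?thesis by (simp only: mod_eq_dvd_iff)
qed

definition val9 :: "int \<Rightarrow> int \<Rightarrow> int \<times> int" where
  "val9 a b = pp (fst (pp (a,b) 1) + fst (pp (a,b) 3) + fst (pp (a,b) 1) - 1,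
                  snd (pp (a,b) 1) + snd (pp (a,b) 3) + snd (pp (a,b) 1) - 0) 4"

lemma val9: "a \<in> {0,1,2} \<Longrightarrow> b \<in> {1,2} \<Longrightarrow> e (val9 a b) = e (-1,0)"
  by (auto simp: val9_def e_eq eval_nat_numeral)

lemma B9:
  assumes ab: "a \<in> {0,1,2}" "b \<in> {1,2}"
  shows "(pcompose (Polynomial.monom 1 9 + Polynomial.monom 1 3 + Polynomial.monom 1 1 - 1 :: F3 poly) (e (a,b))) ^ 4 mod F9_modulus = e (-1,0)"
proof -
  let ?x = "e (a,b)"
  have "(a,b) \<noteq> (0,0)" using ab by auto
  then have "e (pp (a,b) 8) = e (1,0)" using pp8[of a b] ab by auto
  then have x8: "?x ^ 8 mod F9_modulus = 1"
    by (simp only: e_pow e_one[symmetric])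
  have pc: "pcompose (Polynomial.monom 1 9 + Polynomial.monom 1 3 + Polynomial.monom 1 1 - 1 :: F3 poly) ?x
      = ?x ^ 9 + ?x ^ 3 + ?x ^ 1 - 1"
    by (simp only: pcompose_diff pcompose_add pcompose_monom1 pcompose_1)
  have "(pcompose (Polynomial.monom 1 9 + Polynomial.monom 1 3 + Polynomial.monom 1 1 - 1 :: F3 poly) ?x) ^ 4 mod F9_modulus
      = ((?x ^ 9 + ?x ^ 3 + ?x ^ 1 - 1) mod F9_modulus) ^ 4 mod F9_modulus"
    unfolding pc by (rule pow4_mod)
  also have "(?x ^ 9 + ?x ^ 3 + ?x ^ 1 - 1) mod F9_modulus
      = (?x ^ 9 mod F9_modulus + ?x ^ 3 mod F9_modulus + ?x ^ 1 mod F9_modulus - 1) mod F9_modulus"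
    by (rule mod4)
  also have "?x ^ 9 mod F9_modulus = ?x ^ 1 mod F9_modulus"
    using pow_period[OF x8, of 9] by simp
  also have "(?x ^ 1 mod F9_modulus + ?x ^ 3 mod F9_modulus + ?x ^ 1 mod F9_modulus - 1) mod F9_modulus
     = e (fst (pp (a,b) 1) + fst (pp (a,b) 3) + fst (pp (a,b) 1) - 1,
                  snd (pp (a,b) 1) + snd (pp (a,b) 3) + snd (pp (a,b) 1) - 0)"
    by (simp only: e_pow e_one e_add e_diff fst_conv snd_conv e_mod)
  also have "e (fst (pp (a,b) 1) + fst (pp (a,b) 3) + fst (pp (a,b) 1) - 1,
                  snd (pp (a,b) 1) + snd (pp (a,b) 3) + snd (pp (a,b) 1) - 0) ^ 4 mod F9_modulus
      = e (val9 a b)" unfolding val9_def by (rule e_pow)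
  also have "\<dots> = e (-1,0)" by (rule val9[OF ab])
  finally show ?thesis .
qed

lemma case9:
  assumes g: "g = 4"
  shows "\<exists>c m :: nat \<Rightarrow> int.
     (\<forall>i\<in>{2..2*g+1}. m i > 0) \<and>
     (\<exists>a. in_cong_family g c m a) \<and>
     (\<forall>a. in_cong_family g c m a \<longrightarrow>
        good_red3 g a \<and>
        affine_pts_F3 g a = {} \<and>
        (\<exists>\<alpha>\<in>F9. degree \<alpha> = 1 \<and>
           affine_pts_F9 g a =
             {(x, y). \<exists>k::F3. x = [:k:] \<and> (y = \<alpha> \<or> y = - \<alpha>)}))"
proof -
  define F :: "int poly" where "F = Polynomial.monom 1 9 + Polynomial.monom 1 3 + Polynomial.monom 1 1 - 1"
  have cF: "Polynomial.coeff F k = (if k = 9 then 1 else 0) + (if k = 3 then 1 else 0) + (if k = 1 then 1 else 0) - (if k = 0 then 1 else 0)" for k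
    by (simp add: F_def coeff_monom)
  have n: "2*g+1 = 9" using g by simp
  have lc: "Polynomial.coeff F (2*g+1) = 1" unfolding n using cF[of 9] by simp
  have deg: "degree F = 2*g+1"
  proof (rule antisym)
    show "degree F \<le> 2*g+1" unfolding n by (rule degree_le) (use cF in auto)
    show "2*g+1 \<le> degree F" using lc by (intro le_degree) simp
  qed
  have c1: "Polynomial.coeff F (2*g) = 0" using cF[of 8] g by simp
  have c0: "Polynomial.coeff F 0 = -1" using cF[of 0] by simp
  let ?f = "Polynomial.monom 1 9 + Polynomial.monom 1 3 + Polynomial.monom 1 1 - 1 :: F3 poly"
  have mapF: "(map_poly of_int F :: F3 poly) = ?f"
    unfolding F_def by (rule poly_eqI) (simp add: coeff_map_poly coeff_monom coeff_1)
  have g1: "g \<ge> 1" using g by simp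
  show ?thesis
  proof (rule main_generic[OF g1 deg lc c1 c0])
    have "pderiv ?f = Polynomial.monom 9 8 + Polynomial.monom 3 2 + Polynomial.monom 1 0"
      by (simp add: pderiv_add pderiv_diff pderiv_monom)
    also have "\<dots> = 1" by (simp add: F3_9 F3_three)
    finally show "Defs.separable (map_poly of_int F :: F3 poly)"
      unfolding mapF Defs.separable_def by simp
    show "poly (map_poly of_int F :: F3 poly) k = -1" for k
    proof -
      have "k = 0 \<or> k = 1 \<or> k = -1" by (rule F3_cases)
      then show ?thesis unfolding mapF by (auto simp: poly_monom F3_2 F3_4)
    qed
    show "(pcompose (map_poly of_int F :: F3 poly) (e (a,b))) ^ 4 mod F9_modulus = e (-1,0)"
      if "a \<in> {0,1,2}" "b \<in> {1,2}" for a b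
      unfolding mapF by (rule B9[OF that])
  qed
qed


lemma m_exists:
  fixes g :: nat
  assumes "g \<ge> 3" "g \<noteq> 3" "g \<noteq> 4" "g \<noteq> 6"
  shows "\<exists>m. odd m \<and> m + 2 \<le> 2*g+1 \<and> (2*g+1+m) mod 8 = 4 \<and> (3 dvd (2*g+1)) \<noteq> (3 dvd m)"
  using assms by presburger

theorem lemma6p5:
  fixes g :: nat
  assumes "g \<ge> 3"
  shows "\<exists>c m :: nat \<Rightarrow> int.
     (\<forall>i\<in>{2..2*g+1}. m i > 0) \<and>
     (\<exists>a. in_cong_family g c m a) \<and>
     (\<forall>a. in_cong_family g c m a \<longrightarrow>
        good_red3 g a \<and>
        affine_pts_F3 g a = {} \<and>
        (\<exists>\<alpha>\<in>F9. degree \<alpha> = 1 \<and>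
           affine_pts_F9 g a =
             {(x, y). \<exists>k::F3. x = [:k:] \<and> (y = \<alpha> \<or> y = - \<alpha>)}))"
proof -
  have g1: "g \<ge> 1" using assms by simp
  consider "g = 3" | "g = 4" | "g = 6" | "g \<noteq> 3 \<and> g \<noteq> 4 \<and> g \<noteq> 6" by blast
  then show ?thesis
  proof cases
    case 1
    have sep: "Defs.separable (Polynomial.monom 1 (2*g+1) - Polynomial.monom 1 5 - 1 :: F3 poly)"
      using sep7 1 by simp
    show ?thesis by (rule fam_case[OF g1 _ _ _ sep]) (use 1 in simp_all)
  next
    case 2
    then show ?thesis by (rule case9)
  next
    case 3
    have sep: "Defs.separable (Polynomial.monom 1 (2*g+1) - Polynomial.monom 1 7 - 1 :: F3 poly)"
      using sep13 3 by simp
    show ?thesis by (rule fam_case[OF g1 _ _ _ sep]) (use 3 in simp_all)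
  next
    case 4
    then obtain m :: nat where m: "odd m" "m + 2 \<le> 2*g+1" "(2*g+1+m) mod 8 = 4"
      "(3 dvd (2*g+1)) \<noteq> (3 dvd m)"
      using m_exists[OF assms] by blast
    have sep: "Defs.separable (Polynomial.monom 1 (2*g+1) - Polynomial.monom 1 m - 1 :: F3 poly)"
      by (rule fam_sep) (use m in simp_all)
    show ?thesis by (rule fam_case[OF g1 m(1) m(2) m(3) sep])
  qed
qed

end
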